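(* For $n\geq 4$ and $1\leq d\leq n-1$, the set $\Omega_{n,d}$ is connected under switches; that is, any $G\in\Omega_{n,d}$ can be transformed into any $G'\in\Omega_{n,d}$ by a finite sequence of switches, each producing an element of $\Omega_{n,d}$. Equivalently, the switch chain on $\Omega_{n,d}$ is irreducible.
   Context: $\Omega_{n,d}$ is the set of simple digraphs on $[n]$ in which every vertex has in-degree and out-degree $d$. A switch applied to $G$ takes two arcs $(i,j),(k,\ell)$ of $G$ with $|\{i,j,k,\ell\}|=4$ and $(i,\ell),(k,j)\notin A(G)$, and replaces them by $(i,\ell),(k,j)$. *)

theory Defs
  imports Main
begin

text \<open>A digraph on [n] = {1..n} is represented by its arc set.
  Simple: no loops (and, being a set, no multiple arcs).\<close>

definition out_deg :: "(nat \<times> nat) set \<Rightarrow> nat \<Rightarrow> nat" where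
  "out_deg A v = card {w. (v, w) \<in> A}"

definition in_deg :: "(nat \<times> nat) set \<Rightarrow> nat \<Rightarrow> nat" where
  "in_deg A v = card {u. (u, v) \<in> A}"

definition Omega :: "nat \<Rightarrow> nat \<Rightarrow> (nat \<times> nat) set set" where
  "Omega n d = {A. A \<subseteq> {1..n} \<times> {1..n} \<and> (\<forall>v. (v, v) \<notin> A) \<and>
      (\<forall>v\<in>{1..n}. in_deg A v = d \<and> out_deg A v = d)}"

definition switch_step :: "(nat \<times> nat) set \<Rightarrow> (nat \<times> nat) set \<Rightarrow> bool" where
  "switch_step A B \<longleftrightarrow> (\<exists>i j k l. (i, j) \<in> A \<and> (k, l) \<in> A \<and> card {i, j, k, l} = 4 \<and>
      (i, l) \<notin> A \<and> (k, j) \<notin> A \<and>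
      B = (A - {(i, j), (k, l)}) \<union> {(i, l), (k, j)})"

definition switch_in_Omega :: "nat \<Rightarrow> nat \<Rightarrow> (nat \<times> nat) set \<Rightarrow> (nat \<times> nat) set \<Rightarrow> bool" where
  "switch_in_Omega n d A B \<longleftrightarrow> A \<in> Omega n d \<and> B \<in> Omega n d \<and> switch_step A B"

end

theory Submission
  imports Defs
begin


definition Odd :: "nat \<Rightarrow> (nat\<Rightarrow>nat) \<Rightarrow> (nat\<Rightarrow>nat) \<Rightarrow> (nat\<times>nat) set" where
  "Odd k r c = (\<lambda>i. (r i, c i)) ` {..<k}"
definition Even :: "nat \<Rightarrow> (nat\<Rightarrow>nat) \<Rightarrow> (nat\<Rightarrow>nat) \<Rightarrow> (nat\<times>nat) set" where
  "Even k r c = (\<lambda>i. (r (Suc i mod k), c i)) ` {..<k}"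
definition altcyc :: "(nat\<times>nat) set \<Rightarrow> nat \<Rightarrow> (nat\<Rightarrow>nat) \<Rightarrow> (nat\<Rightarrow>nat) \<Rightarrow> bool" where
  "altcyc A k r c \<longleftrightarrow> 2 \<le> k \<and> inj_on r {..<k} \<and> inj_on c {..<k} \<and>
     (\<forall>i<k. (r i, c i) \<in> A \<and> (r (Suc i mod k), c i) \<notin> A \<and> r (Suc i mod k) \<noteq> c i)"

lemma card_swap: "finite S \<Longrightarrow> x \<in> S \<Longrightarrow> y \<notin> S \<Longrightarrow> card (S - {x} \<union> {y}) = card S"
proof -
  assume a: "finite S" "x \<in> S" "y \<notin> S"
  have "card (S - {x} \<union> {y}) = card (insert y (S - {x}))" by simp
  also have "\<dots> = Suc (card (S - {x}))" using a by simp
  also have "\<dots> = card S" using a card_gt_0_iff[of S] by (auto simp: card_Diff_singleton)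
  finally show ?thesis .
qed

lemma Omega_fin: "A \<in> Omega n d \<Longrightarrow> finite A"
proof -
  assume "A \<in> Omega n d"
  hence "A \<subseteq> {1..n}\<times>{1..n}" unfolding Omega_def by blast
  thus ?thesis by (rule finite_subset) simp
qed

lemma omega_swap:
  assumes A: "A \<in> Omega n d" and cy: "altcyc A k r c"
  shows "A - Odd k r c \<union> Even k r c \<in> Omega n d"
proof -
  let ?A' = "A - Odd k r c \<union> Even k r c"
  have k2: "2 \<le> k" and ir: "inj_on r {..<k}" and ic: "inj_on c {..<k}"
    and od: "\<And>i. i<k \<Longrightarrow> (r i, c i) \<in> A"
    and ev: "\<And>i. i<k \<Longrightarrow> (r (Suc i mod k), c i) \<notin> A"
    and nl: "\<And>i. i<k \<Longrightarrow> r (Suc i mod k) \<noteq> c i"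
    using cy unfolding altcyc_def by auto
  have sub: "A \<subseteq> {1..n}\<times>{1..n}" and loop: "\<And>v. (v,v) \<notin> A"
    and deg: "\<And>v. v\<in>{1..n} \<Longrightarrow> in_deg A v = d \<and> out_deg A v = d"
    using A unfolding Omega_def by auto
  have smod: "\<And>i. i<k \<Longrightarrow> Suc i mod k < k" using k2 by simp
  have rn: "\<And>i. i<k \<Longrightarrow> r i \<in> {1..n}" and cn: "\<And>i. i<k \<Longrightarrow> c i \<in> {1..n}"
    using od sub by blast+
  have sub': "?A' \<subseteq> {1..n}\<times>{1..n}"
    using sub rn[OF smod] cn unfolding Even_def by auto
  have loop': "\<And>v. (v,v) \<notin> ?A'"
    using loop nl unfolding Even_def by auto
  have fin_in: "\<And>v. finite {u. (u,v) \<in> A}"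
  proof -
    fix v have "{u. (u,v) \<in> A} \<subseteq> {1..n}" using sub by auto
    thus "finite {u. (u,v) \<in> A}" by (rule finite_subset) simp
  qed
  have fin_out: "\<And>v. finite {w. (v,w) \<in> A}"
  proof -
    fix v have "{w. (v,w) \<in> A} \<subseteq> {1..n}" using sub by auto
    thus "finite {w. (v,w) \<in> A}" by (rule finite_subset) simp
  qed
  have indeg: "in_deg ?A' v = in_deg A v" for v
  proof (cases "\<exists>i<k. c i = v")
    case True
    then obtain i where i: "i<k" "c i = v" by blast
    have "{u. (u,v) \<in> ?A'} = {u. (u,v) \<in> A} - {r i} \<union> {r (Suc i mod k)}"
    proof -
      have o: "(u,v) \<in> Odd k r c \<longleftrightarrow> u = r i" for u
        using i ic unfolding Odd_def inj_on_def by auto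
      have e: "(u,v) \<in> Even k r c \<longleftrightarrow> u = r (Suc i mod k)" for u
        using i ic unfolding Even_def inj_on_def by auto
      show ?thesis using o e ev i by auto
    qed
    moreover have "card ({u. (u,v) \<in> A} - {r i} \<union> {r (Suc i mod k)}) = card {u. (u,v) \<in> A}"
      by (rule card_swap) (use fin_in od ev i in auto)
    ultimately show ?thesis unfolding in_deg_def by simp
  next
    case False
    have "{u. (u,v) \<in> ?A'} = {u. (u,v) \<in> A}"
      using False unfolding Odd_def Even_def by auto
    thus ?thesis unfolding in_deg_def by simp
  qed
  have outdeg: "out_deg ?A' v = out_deg A v" for v
  proof (cases "\<exists>j<k. r j = v")
    case True
    then obtain j where j: "j<k" "r j = v" by blast
    define p where "p = (if j = 0 then k - 1 else j - 1)"
    have p: "p < k" "Suc p mod k = j" using j k2 unfolding p_def by auto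
    have pe: "\<And>i. i < k \<Longrightarrow> Suc i mod k = j \<Longrightarrow> i = p"
    proof -
      fix i assume "i<k" "Suc i mod k = j"
      thus "i = p" using k2 unfolding p_def
        by (cases "Suc i = k") (auto simp: mod_if split: if_splits)
    qed
    have "{w. (v,w) \<in> ?A'} = {w. (v,w) \<in> A} - {c j} \<union> {c p}"
    proof -
      have o: "(v,w) \<in> Odd k r c \<longleftrightarrow> w = c j" for w
        using j ir unfolding Odd_def inj_on_def by auto
      have e: "(v,w) \<in> Even k r c \<longleftrightarrow> w = c p" for w
      proof
        assume "(v,w) \<in> Even k r c"
        then obtain i where "i<k" "r (Suc i mod k) = v" "c i = w" unfolding Even_def by auto
        moreover have "Suc i mod k = j" using ir j smod[OF \<open>i<k\<close>] \<open>r (Suc i mod k) = v\<close>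
          unfolding inj_on_def by auto
        ultimately show "w = c p" using pe by auto
      next
        assume "w = c p" thus "(v,w) \<in> Even k r c" using p j unfolding Even_def by force
      qed
      show ?thesis using o e ev p j by auto
    qed
    moreover have "card ({w. (v,w) \<in> A} - {c j} \<union> {c p}) = card {w. (v,w) \<in> A}"
      by (rule card_swap) (use fin_out od ev p j in auto)
    ultimately show ?thesis unfolding out_deg_def by simp
  next
    case False
    have "(v,w) \<notin> Even k r c" for w
    proof
      assume "(v,w) \<in> Even k r c"
      then obtain i where "i<k" "r (Suc i mod k) = v" unfolding Even_def by auto
      thus False using False smod by blast
    qed
    hence "{w. (v,w) \<in> ?A'} = {w. (v,w) \<in> A}"
      using False unfolding Odd_def by auto
    thus ?thesis unfolding out_deg_def by simp
  qed
  show ?thesis unfolding Omega_def using sub' loop' indeg outdeg deg by auto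
qed



abbreviation conn where "conn n d \<equiv> (switch_in_Omega n d)\<^sup>*\<^sup>*"

lemma sw:
  assumes A: "A \<in> Omega n d" and h: "(i,j) \<in> A" "(k,l) \<in> A" "(i,l) \<notin> A" "(k,j) \<notin> A"
    and dd: "i\<noteq>j" "i\<noteq>k" "i\<noteq>l" "j\<noteq>k" "j\<noteq>l" "k\<noteq>l"
  shows "A - {(i,j),(k,l)} \<union> {(i,l),(k,j)} \<in> Omega n d"
    and "switch_in_Omega n d A (A - {(i,j),(k,l)} \<union> {(i,l),(k,j)})"
proof -
  define r where "r = (\<lambda>t::nat. if t = 0 then i else k)"
  define c where "c = (\<lambda>t::nat. if t = 0 then j else l)"
  have lt2: "{..<2::nat} = {0,1}" by auto
  have al: "\<And>P. (\<forall>i<2::nat. P i) \<longleftrightarrow> P 0 \<and> P 1" by (auto simp: less_2_cases_iff)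
  have cy: "altcyc A 2 r c" unfolding altcyc_def r_def c_def inj_on_def lt2 al
    using h dd by auto
  have o: "Odd 2 r c = {(i,j),(k,l)}" unfolding Odd_def lt2 r_def c_def by auto
  have e: "Even 2 r c = {(i,l),(k,j)}" unfolding Even_def lt2 r_def c_def by auto
  show B: "A - {(i,j),(k,l)} \<union> {(i,l),(k,j)} \<in> Omega n d"
    using omega_swap[OF A cy] o e by simp
  have "card {i,j,k,l} = 4" using dd by simp
  thus "switch_in_Omega n d A (A - {(i,j),(k,l)} \<union> {(i,l),(k,j)})"
    unfolding switch_in_Omega_def switch_step_def using A B h by blast
qed

lemma swc:
  assumes "A \<in> Omega n d" "(i,j) \<in> A" "(k,l) \<in> A" "(i,l) \<notin> A" "(k,j) \<notin> A"
    "i\<noteq>j" "i\<noteq>k" "i\<noteq>l" "j\<noteq>k" "j\<noteq>l" "k\<noteq>l"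
    and "B = A - {(i,j),(k,l)} \<union> {(i,l),(k,j)}"
    and "conn n d B C"
  shows "conn n d A C"
  using sw[OF assms(1-11)] assms(12,13) by (metis converse_rtranclp_into_rtranclp)

lemma swl:
  assumes "A \<in> Omega n d" "(i,j) \<in> A" "(k,l) \<in> A" "(i,l) \<notin> A" "(k,j) \<notin> A"
    "i\<noteq>j" "i\<noteq>k" "i\<noteq>l" "j\<noteq>k" "j\<noteq>l" "k\<noteq>l"
    and "C = A - {(i,j),(k,l)} \<union> {(i,l),(k,j)}"
  shows "conn n d A C"
  using sw[OF assms(1-11)] assms(12) by auto

lemma swc1:
  assumes "A \<in> Omega n d" "(i,j) \<in> A" "(k,l) \<in> A" "(i,l) \<notin> A" "(k,j) \<notin> A"
    "i\<noteq>j" "i\<noteq>k" "i\<noteq>l" "j\<noteq>k" "j\<noteq>l" "k\<noteq>l"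
    and "B = A - {(i,j),(k,l)} \<union> {(i,l),(k,j)}"
  shows "B \<in> Omega n d"
  using sw[OF assms(1-11)] assms(12) by simp

definition tri where
  "tri G a b c = G - {(a,b),(b,c),(c,a)} \<union> {(b,a),(c,b),(a,c)}"

lemma tri_P1:
  assumes G: "G \<in> Omega n d" and t: "(a,b) \<in> G" "(b,c) \<in> G" "(c,a) \<in> G"
    "(b,a) \<notin> G" "(c,b) \<notin> G" "(a,c) \<notin> G"
    and y: "y \<noteq> a" "y \<noteq> b" "y \<noteq> c" and yc: "(y,c) \<in> G" and yb: "(y,b) \<notin> G"
  shows "conn n d G (tri G a b c)"
proof -
  have lp: "\<And>v. (v,v) \<notin> G" using G unfolding Omega_def by auto
  have ab: "a \<noteq> b" "b \<noteq> c" "a \<noteq> c" using t lp by metis+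
  define H1 where "H1 = G - {(a,b),(y,c)} \<union> {(a,c),(y,b)}"
  have H1: "H1 \<in> Omega n d" by (rule swc1[OF G _ _ _ _ _ _ _ _ _ _ H1_def]) (use t y yc yb ab in auto)
  have c1: "conn n d G H1" by (rule swc[OF G _ _ _ _ _ _ _ _ _ _ H1_def]) (use t y yc yb ab in auto)
  show ?thesis
  proof (cases "(y,a) \<in> G")
    case False
    define H2 where "H2 = H1 - {(c,a),(y,b)} \<union> {(c,b),(y,a)}"
    have H2: "H2 \<in> Omega n d" by (rule swc1[OF H1 _ _ _ _ _ _ _ _ _ _ H2_def]) (use t y yc yb ab False in \<open>auto simp: H1_def\<close>)
    have "conn n d H1 H2" by (rule swc[OF H1 _ _ _ _ _ _ _ _ _ _ H2_def]) (use t y yc yb ab False in \<open>auto simp: H1_def\<close>)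
    moreover have "conn n d H2 (tri G a b c)"
      by (rule swl[OF H2, of b c y a]) (use t y yc yb ab False in \<open>auto simp: H1_def H2_def tri_def\<close>)
    ultimately show ?thesis using c1 by (metis rtranclp_trans)
  next
    case True
    define H2 where "H2 = H1 - {(y,a),(b,c)} \<union> {(y,c),(b,a)}"
    have H2: "H2 \<in> Omega n d" by (rule swc1[OF H1 _ _ _ _ _ _ _ _ _ _ H2_def]) (use t y yc yb ab True in \<open>auto simp: H1_def\<close>)
    have "conn n d H1 H2" by (rule swc[OF H1 _ _ _ _ _ _ _ _ _ _ H2_def]) (use t y yc yb ab True in \<open>auto simp: H1_def\<close>)
    moreover have "conn n d H2 (tri G a b c)"
      by (rule swl[OF H2, of c a y b]) (use t y yc yb ab True in \<open>auto simp: H1_def H2_def tri_def\<close>)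
    ultimately show ?thesis using c1 by (metis rtranclp_trans)
  qed
qed



lemma outN: "G \<in> Omega n d \<Longrightarrow> v \<in> {1..n} \<Longrightarrow> card {w. (v,w) \<in> G} = d \<and> finite {w. (v,w) \<in> G}"
proof -
  assume G: "G \<in> Omega n d" and v: "v \<in> {1..n}"
  have "{w. (v,w) \<in> G} \<subseteq> {1..n}" using G unfolding Omega_def by auto
  hence "finite {w. (v,w) \<in> G}" by (rule finite_subset) simp
  thus ?thesis using G v unfolding Omega_def out_deg_def by auto
qed

lemma tri_S1:
  assumes G: "G \<in> Omega n d" and t: "(a,b) \<in> G" "(b,c) \<in> G" "(c,a) \<in> G"
    "(b,a) \<notin> G" "(c,b) \<notin> G" "(a,c) \<notin> G"
    and y: "y \<noteq> a" "y \<noteq> b" "y \<noteq> c" "y \<in> {1..n}" and ny: "(y,a) \<notin> G" "(y,b) \<notin> G" "(y,c) \<notin> G"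
  shows "conn n d G (tri G a b c)"
proof -
  have lp: "\<And>v. (v,v) \<notin> G" using G unfolding Omega_def by auto
  have ab: "a \<noteq> b" "b \<noteq> c" "a \<noteq> c" using t lp by metis+
  have an: "a \<in> {1..n}" using G t unfolding Omega_def by auto
  obtain z where z: "(y,z) \<in> G" "(a,z) \<notin> G"
  proof -
    have "\<not> {w. (y,w) \<in> G} \<subseteq> {w. (a,w) \<in> G} - {b}"
    proof
      assume s: "{w. (y,w) \<in> G} \<subseteq> {w. (a,w) \<in> G} - {b}"
      have "card {w. (y,w) \<in> G} \<le> card ({w. (a,w) \<in> G} - {b})"
        by (rule card_mono) (use outN[OF G an] s in auto)
      also have "\<dots> = d - 1" using outN[OF G an] t by (simp add: card_Diff_singleton)
      finally show False using outN[OF G y(4)] outN[OF G an] t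
        by (metis (mono_tags) card_0_eq diff_less empty_iff less_numeral_extra(1) mem_Collect_eq not_gr0 not_le)
    qed
    thus ?thesis using that ny by blast
  qed
  have zz: "z \<noteq> y" "z \<noteq> a" "z \<noteq> b" "z \<noteq> c" using z ny lp by auto
  define H1 where "H1 = G - {(a,b),(y,z)} \<union> {(a,z),(y,b)}"
  have H1: "H1 \<in> Omega n d" by (rule swc1[OF G _ _ _ _ _ _ _ _ _ _ H1_def]) (use t y ny ab z zz in auto)
  have c1: "conn n d G H1" by (rule swc[OF G _ _ _ _ _ _ _ _ _ _ H1_def]) (use t y ny ab z zz in auto)
  define H2 where "H2 = H1 - {(c,a),(y,b)} \<union> {(c,b),(y,a)}"
  have H2: "H2 \<in> Omega n d" by (rule swc1[OF H1 _ _ _ _ _ _ _ _ _ _ H2_def]) (use t y ny ab z zz in \<open>auto simp: H1_def\<close>)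
  have c2: "conn n d H1 H2" by (rule swc[OF H1 _ _ _ _ _ _ _ _ _ _ H2_def]) (use t y ny ab z zz in \<open>auto simp: H1_def\<close>)
  define H3 where "H3 = H2 - {(b,c),(y,a)} \<union> {(b,a),(y,c)}"
  have H3: "H3 \<in> Omega n d" by (rule swc1[OF H2 _ _ _ _ _ _ _ _ _ _ H3_def]) (use t y ny ab z zz in \<open>auto simp: H1_def H2_def\<close>)
  have c3: "conn n d H2 H3" by (rule swc[OF H2 _ _ _ _ _ _ _ _ _ _ H3_def]) (use t y ny ab z zz in \<open>auto simp: H1_def H2_def\<close>)
  have c4: "conn n d H3 (tri G a b c)"
    by (rule swl[OF H3, of a z y c]) (use t y ny ab z zz in \<open>auto simp: H1_def H2_def H3_def tri_def\<close>)
  show ?thesis using c1 c2 c3 c4 by (metis rtranclp_trans)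
qed

lemma tri_S2:
  assumes G: "G \<in> Omega n d" and t: "(a,b) \<in> G" "(b,c) \<in> G" "(c,a) \<in> G"
    "(b,a) \<notin> G" "(c,b) \<notin> G" "(a,c) \<notin> G"
    and y: "y \<noteq> a" "y \<noteq> b" "y \<noteq> c" "y \<in> {1..n}" and ny: "(y,a) \<in> G" "(y,b) \<in> G" "(y,c) \<in> G"
  shows "conn n d G (tri G a b c)"
proof -
  have lp: "\<And>v. (v,v) \<notin> G" using G unfolding Omega_def by auto
  have ab: "a \<noteq> b" "b \<noteq> c" "a \<noteq> c" using t lp by metis+
  have an: "a \<in> {1..n}" using G t unfolding Omega_def by auto
  obtain z where z: "(a,z) \<in> G" "(y,z) \<notin> G" "z \<noteq> a" "z \<noteq> b" "z \<noteq> c" "z \<noteq> y"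
  proof -
    have "\<not> {w. (a,w) \<in> G} \<subseteq> {b,y} \<union> ({w. (y,w) \<in> G} - {a,b,c})"
    proof
      assume s: "{w. (a,w) \<in> G} \<subseteq> {b,y} \<union> ({w. (y,w) \<in> G} - {a,b,c})"
      have "card {w. (a,w) \<in> G} \<le> card ({b,y} \<union> ({w. (y,w) \<in> G} - {a,b,c}))"
        by (rule card_mono) (use outN[OF G y(4)] s in auto)
      also have "\<dots> \<le> card {b,y} + card ({w. (y,w) \<in> G} - {a,b,c})" by (rule card_Un_le)
      also have "card ({w. (y,w) \<in> G} - {a,b,c}) = d - 3"
        using outN[OF G y(4)] ny ab by (simp add: card_Diff_subset)
      also have "card {b,y} \<le> 2" by (simp add: card_insert_le_m1)
      finally have "d \<le> 2 + (d - 3)" using outN[OF G an] by simp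
      moreover have "3 \<le> d"
      proof -
        have "card {a,b,c} \<le> card {w. (y,w) \<in> G}" by (rule card_mono) (use outN[OF G y(4)] ny in auto)
        thus ?thesis using ab outN[OF G y(4)] by simp
      qed
      ultimately show False by simp
    qed
    thus ?thesis using that lp t by blast
  qed
  define H1 where "H1 = G - {(a,z),(y,c)} \<union> {(a,c),(y,z)}"
  have H1: "H1 \<in> Omega n d" by (rule swc1[OF G _ _ _ _ _ _ _ _ _ _ H1_def]) (use t y ny ab z in auto)
  have c1: "conn n d G H1" by (rule swc[OF G _ _ _ _ _ _ _ _ _ _ H1_def]) (use t y ny ab z in auto)
  define H2 where "H2 = H1 - {(b,c),(y,a)} \<union> {(b,a),(y,c)}"
  have H2: "H2 \<in> Omega n d" by (rule swc1[OF H1 _ _ _ _ _ _ _ _ _ _ H2_def]) (use t y ny ab z in \<open>auto simp: H1_def\<close>)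
  have c2: "conn n d H1 H2" by (rule swc[OF H1 _ _ _ _ _ _ _ _ _ _ H2_def]) (use t y ny ab z in \<open>auto simp: H1_def\<close>)
  define H3 where "H3 = H2 - {(c,a),(y,b)} \<union> {(c,b),(y,a)}"
  have H3: "H3 \<in> Omega n d" by (rule swc1[OF H2 _ _ _ _ _ _ _ _ _ _ H3_def]) (use t y ny ab z in \<open>auto simp: H1_def H2_def\<close>)
  have c3: "conn n d H2 H3" by (rule swc[OF H2 _ _ _ _ _ _ _ _ _ _ H3_def]) (use t y ny ab z in \<open>auto simp: H1_def H2_def\<close>)
  have c4: "conn n d H3 (tri G a b c)"
    by (rule swl[OF H3, of a b y z]) (use t y ny ab z in \<open>auto simp: H1_def H2_def H3_def tri_def\<close>)
  show ?thesis using c1 c2 c3 c4 by (metis rtranclp_trans)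
qed

lemma tri_rot: "tri G a b c = tri G b c a" unfolding tri_def by auto

lemma triangle:
  assumes G: "G \<in> Omega n d" and n4: "4 \<le> n" and t: "(a,b) \<in> G" "(b,c) \<in> G" "(c,a) \<in> G"
    "(b,a) \<notin> G" "(c,b) \<notin> G" "(a,c) \<notin> G"
  shows "conn n d G (tri G a b c)"
proof -
  obtain y where y: "y \<in> {1..n}" "y \<noteq> a" "y \<noteq> b" "y \<noteq> c"
  proof -
    have "card ({1..n} - {a,b,c}) \<ge> card {1..n} - card {a,b,c}" by (rule diff_card_le_card_Diff) simp
    moreover have "card {a,b,c} \<le> 3" by (simp add: card_insert_le_m1)
    ultimately have "card ({1..n} - {a,b,c}) > 0" using n4 by simp
    hence "{1..n} - {a,b,c} \<noteq> {}" by (metis card.empty less_irrefl)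
    thus ?thesis using that by blast
  qed
  show ?thesis
  proof (cases "(y,a) \<in> G \<and> (y,b) \<in> G \<and> (y,c) \<in> G")
    case True thus ?thesis using tri_S2[OF G t y(2-4,1)] by blast
  next
    case F1: False
    show ?thesis
    proof (cases "(y,a) \<notin> G \<and> (y,b) \<notin> G \<and> (y,c) \<notin> G")
      case True thus ?thesis using tri_S1[OF G t y(2-4,1)] by blast
    next
      case False
      have P1: "?thesis" if "(y,c) \<in> G" "(y,b) \<notin> G"
        using tri_P1[OF G t y(2-4) that] .
      have P2: "?thesis" if "(y,a) \<in> G" "(y,c) \<notin> G"
        using tri_P1[OF G t(2,3,1,5,6,4) y(3,4,2) that] tri_rot by metis
      have P3: "?thesis" if "(y,b) \<in> G" "(y,a) \<notin> G"
        using tri_P1[OF G t(3,1,2,6,4,5) y(4,2,3) that] tri_rot by metis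
      show ?thesis using F1 False P1 P2 P3 by blast
    qed
  qed
qed



definition walk :: "(nat\<times>nat) set \<Rightarrow> (nat\<times>nat) set \<Rightarrow> nat \<Rightarrow> (nat\<Rightarrow>nat) \<Rightarrow> (nat\<Rightarrow>nat) \<Rightarrow> bool" where
  "walk R B m r c \<longleftrightarrow> 0 < m \<and> (\<forall>t<m. (r t, c t) \<in> R \<and> (r (Suc t mod m), c t) \<in> B)"

lemma inN: "G \<in> Omega n d \<Longrightarrow> v \<in> {1..n} \<Longrightarrow> card {w. (w,v) \<in> G} = d \<and> finite {w. (w,v) \<in> G}"
proof -
  assume G: "G \<in> Omega n d" and v: "v \<in> {1..n}"
  have "{w. (w,v) \<in> G} \<subseteq> {1..n}" using G unfolding Omega_def by auto
  hence "finite {w. (w,v) \<in> G}" by (rule finite_subset) simp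
  thus ?thesis using G v unfolding Omega_def in_deg_def by auto
qed

lemma step_out:
  assumes G: "G \<in> Omega n d" and G': "G' \<in> Omega n d" and uv: "(u,v) \<in> G' - G"
  shows "\<exists>w. (u,w) \<in> G - G'"
proof (rule ccontr)
  assume "\<not> ?thesis"
  hence s: "{w. (u,w) \<in> G} \<subseteq> {w. (u,w) \<in> G'}" by auto
  have u: "u \<in> {1..n}" using G' uv unfolding Omega_def by auto
  have "{w. (u,w) \<in> G} = {w. (u,w) \<in> G'}"
    by (rule card_subset_eq) (use s outN[OF G u] outN[OF G' u] in auto)
  thus False using uv by auto
qed

lemma step_in:
  assumes G: "G \<in> Omega n d" and G': "G' \<in> Omega n d" and uv: "(u,v) \<in> G - G'"
  shows "\<exists>w. (w,v) \<in> G' - G"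
proof (rule ccontr)
  assume "\<not> ?thesis"
  hence s: "{w. (w,v) \<in> G'} \<subseteq> {w. (w,v) \<in> G}" by auto
  have v: "v \<in> {1..n}" using G uv unfolding Omega_def by auto
  have "{w. (w,v) \<in> G'} = {w. (w,v) \<in> G}"
    by (rule card_subset_eq) (use s inN[OF G v] inN[OF G' v] in auto)
  thus False using uv by auto
qed

lemma walk_exists:
  assumes G: "G \<in> Omega n d" and G': "G' \<in> Omega n d" and ne: "G \<noteq> G'"
  shows "\<exists>m r c. walk (G - G') (G' - G) m r c"
proof -
  let ?R = "G - G'" and ?B = "G' - G"
  obtain x0 where x0: "x0 \<in> ?R"
  proof (cases "G \<subseteq> G'")
    case True
    then obtain u v where "(u,v) \<in> ?B" using ne by auto
    thus ?thesis using step_out[OF G G'] that by blast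
  next
    case False thus ?thesis using that by auto
  qed
  have ex: "\<exists>y. y \<in> ?R \<and> (fst y, snd x) \<in> ?B" if "x \<in> ?R" for x
  proof -
    have "(fst x, snd x) \<in> ?R" using that by simp
    then obtain w where w: "(w, snd x) \<in> ?B" using step_in[OF G G', of "fst x" "snd x"] by blast
    then obtain w' where "(w,w') \<in> ?R" using step_out[OF G G'] by blast
    thus ?thesis using w by force
  qed
  define F where "F = (\<lambda>x::nat\<times>nat. SOME y. y \<in> ?R \<and> (fst y, snd x) \<in> ?B)"
  have F: "F x \<in> ?R \<and> (fst (F x), snd x) \<in> ?B" if "x \<in> ?R" for x
    unfolding F_def using someI_ex[OF ex[OF that]] .
  define s where "s = (\<lambda>t. (F ^^ t) x0)"
  have sR: "s t \<in> ?R" for t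
  proof (induction t)
    case 0 thus ?case using x0 by (simp add: s_def)
  next
    case (Suc t) thus ?case using F[OF Suc] by (simp add: s_def)
  qed
  have sS: "s (Suc t) = F (s t)" for t by (simp add: s_def)
  have finR: "finite ?R" using Omega_fin[OF G] by auto
  have "\<not> inj_on s {..card ?R}"
  proof
    assume "inj_on s {..card ?R}"
    hence "card (s ` {..card ?R}) = card {..card ?R}" by (rule card_image)
    moreover have "card (s ` {..card ?R}) \<le> card ?R" by (rule card_mono[OF finR]) (use sR in auto)
    ultimately show False by simp
  qed
  then obtain p q where pq: "p < q" "s p = s q"
    unfolding inj_on_def by (metis linorder_neqE_nat)
  define m where "m = q - p"
  define r where "r = (\<lambda>t. fst (s (p+t)))"
  define c where "c = (\<lambda>t. snd (s (p+t)))"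
  have "walk ?R ?B m r c"
    unfolding walk_def
  proof (intro conjI allI impI)
    show "0 < m" using pq m_def by simp
    fix t assume t: "t < m"
    show "(r t, c t) \<in> ?R" using sR unfolding r_def c_def by simp
    show "(r (Suc t mod m), c t) \<in> ?B"
    proof (cases "Suc t < m")
      case True
      thus ?thesis using F[OF sR[of "p+t"]] sS[of "p+t"] unfolding r_def c_def by simp
    next
      case False
      hence "Suc t = m" using t by simp
      hence "Suc t mod m = 0" "Suc (p+t) = q" using m_def pq by auto
      thus ?thesis using F[OF sR[of "p+t"]] sS[of "p+t"] pq unfolding r_def c_def by simp
    qed
  qed
  thus ?thesis by blast
qed

lemma walk_min_altcyc:
  assumes G': "G' \<in> Omega n d" and w: "walk (G - G') (G' - G) m r c"
    and mn: "\<forall>m'<m. \<not> (\<exists>r c. walk (G - G') (G' - G) m' r c)"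
  shows "altcyc G m r c"
proof -
  have m0: "0 < m" and W: "\<And>t. t<m \<Longrightarrow> (r t, c t) \<in> G - G' \<and> (r (Suc t mod m), c t) \<in> G' - G"
    using w unfolding walk_def by auto
  have lp: "\<And>v. (v,v) \<notin> G'" using G' unfolding Omega_def by auto
  have m2: "2 \<le> m"
  proof (rule ccontr)
    assume "\<not> 2 \<le> m" hence "m = 1" using m0 by simp
    hence "(r 0, c 0) \<in> G - G'" "(r 0, c 0) \<in> G' - G" using W[of 0] m0 by auto
    thus False by blast
  qed
  have ir: "inj_on r {..<m}"
  proof (rule inj_onI, rule ccontr)
    fix i j assume ij: "i \<in> {..<m}" "j \<in> {..<m}" "r i = r j" "i \<noteq> j"
    have key: "False" if "i < j" "j < m" "r i = r j" for i j
    proof -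
      define r' where "r' = (\<lambda>t. r (i+t))"
      define c' where "c' = (\<lambda>t. c (i+t))"
      have "walk (G - G') (G' - G) (j - i) r' c'"
        unfolding walk_def
      proof (intro conjI allI impI)
        show "0 < j - i" using that by simp
        fix t assume t: "t < j - i"
        show "(r' t, c' t) \<in> G - G'" using W[of "i+t"] t that unfolding r'_def c'_def by simp
        show "(r' (Suc t mod (j-i)), c' t) \<in> G' - G"
        proof (cases "Suc t < j - i")
          case True thus ?thesis using W[of "i+t"] t that unfolding r'_def c'_def by simp
        next
          case False
          hence "Suc t = j - i" using t by simp
          hence e: "Suc (i+t) = j" "Suc t mod (j - i) = 0" using that by auto
          show ?thesis using W[of "i+t"] t that e unfolding r'_def c'_def by simp
        qed
      qed
      moreover have "j - i < m" using that by simp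
      ultimately show False using mn by blast
    qed
    show False using ij key[of i j] key[of j i] by (cases "i < j") auto
  qed
  have ic: "inj_on c {..<m}"
  proof (rule inj_onI, rule ccontr)
    fix i j assume ij: "i \<in> {..<m}" "j \<in> {..<m}" "c i = c j" "i \<noteq> j"
    have key: "False" if "i < j" "j < m" "c i = c j" for i j
    proof -
      define r' where "r' = (\<lambda>t. r (i+1+t))"
      define c' where "c' = (\<lambda>t. c (i+1+t))"
      have "walk (G - G') (G' - G) (j - i) r' c'"
        unfolding walk_def
      proof (intro conjI allI impI)
        show "0 < j - i" using that by simp
        fix t assume t: "t < j - i"
        show "(r' t, c' t) \<in> G - G'" using W[of "i+1+t"] t that unfolding r'_def c'_def by simp
        show "(r' (Suc t mod (j-i)), c' t) \<in> G' - G"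
        proof (cases "Suc t < j - i")
          case True thus ?thesis using W[of "i+1+t"] t that unfolding r'_def c'_def by simp
        next
          case False
          hence "Suc t = j - i" using t by simp
          hence "i + 1 + t = j" "Suc t mod (j - i) = 0" by simp_all
          moreover have "Suc i mod m = Suc i" using that by simp
          ultimately show ?thesis using W[of i] t that unfolding r'_def c'_def by simp
        qed
      qed
      moreover have "j - i < m" using that by simp
      ultimately show False using mn by blast
    qed
    show False using ij key[of i j] key[of j i] by (cases "i < j") auto
  qed
  show ?thesis unfolding altcyc_def using m2 ir ic W lp by (metis DiffD1 DiffD2)
qed



definition symd :: "(nat\<times>nat) set \<Rightarrow> (nat\<times>nat) set \<Rightarrow> (nat\<times>nat) set" where
  "symd A B = (A - B) \<union> (B - A)"

lemma symd_sub:
  "X \<subseteq> G \<Longrightarrow> E \<inter> G = {} \<Longrightarrow> X2 \<subseteq> G \<Longrightarrow> E2 \<inter> G = {} \<Longrightarrow>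
   symd (G - X2 \<union> E2) (G - X \<union> E) \<subseteq> (X - X2) \<union> (X2 - X) \<union> (E - E2) \<union> (E2 - E)"
  unfolding symd_def by auto

lemma altcyc_facts:
  assumes "altcyc G k r c"
  shows "Odd k r c \<subseteq> G" "Even k r c \<inter> G = {}"
  using assms unfolding altcyc_def Odd_def Even_def by auto

lemma symd_G: "altcyc G k r c \<Longrightarrow> symd G (G - Odd k r c \<union> Even k r c) = Odd k r c \<union> Even k r c"
  using altcyc_facts[of G k r c] unfolding symd_def by auto

lemma card_OE: "card (Odd k r c \<union> Even k r c) \<le> 2*k"
proof -
  have "card (Odd k r c \<union> Even k r c) \<le> card (Odd k r c) + card (Even k r c)" by (rule card_Un_le)
  also have "card (Odd k r c) \<le> k" unfolding Odd_def using card_image_le[of "{..<k}"] by simp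
  also have "card (Even k r c) \<le> k" unfolding Even_def using card_image_le[of "{..<k}"] by simp
  finally show ?thesis by simp
qed

lemma card_OE_eq:
  assumes "altcyc G k r c" shows "card (Odd k r c \<union> Even k r c) = 2*k"
proof -
  have ir: "inj_on r {..<k}" and ic: "inj_on c {..<k}" using assms unfolding altcyc_def by auto
  have "card (Odd k r c) = k" unfolding Odd_def
    by (subst card_image) (use ir in \<open>auto simp: inj_on_def\<close>)
  moreover have "card (Even k r c) = k" unfolding Even_def
    by (subst card_image) (use ic in \<open>auto simp: inj_on_def\<close>)
  moreover have "Odd k r c \<inter> Even k r c = {}" using altcyc_facts[OF assms] by auto
  moreover have "finite (Odd k r c)" "finite (Even k r c)" unfolding Odd_def Even_def by auto
  ultimately show ?thesis by (simp add: card_Un_disjoint)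
qed

lemma card4: "finite A \<Longrightarrow> finite B \<Longrightarrow> finite C \<Longrightarrow> finite D \<Longrightarrow>
  card (A \<union> B \<union> C \<union> D) \<le> card A + card B + card C + card D"
  by (metis (no_types) add_le_mono card_Un_le le_trans order_refl)

lemma chordA:
  assumes cy: "altcyc G k r c" and b: "1 \<le> b" "b + 2 \<le> k" and ch: "r 0 \<noteq> c b" "(r 0, c b) \<notin> G"
  shows "altcyc G (b+1) r c"
    and "card (symd (G - Odd (b+1) r c \<union> Even (b+1) r c) (G - Odd k r c \<union> Even k r c)) < 2*k"
proof -
  have k2: "2 \<le> k" and ir: "inj_on r {..<k}" and ic: "inj_on c {..<k}"
    and W: "\<And>i. i<k \<Longrightarrow> (r i, c i) \<in> G \<and> (r (Suc i mod k), c i) \<notin> G \<and> r (Suc i mod k) \<noteq> c i"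
    using cy unfolding altcyc_def by auto
  show cyA: "altcyc G (b+1) r c"
    unfolding altcyc_def
  proof (intro conjI allI impI)
    show "2 \<le> b+1" using b by simp
    show "inj_on r {..<b+1}" by (rule inj_on_subset[OF ir]) (use b in auto)
    show "inj_on c {..<b+1}" by (rule inj_on_subset[OF ic]) (use b in auto)
    fix i assume i: "i < b+1"
    show "(r i, c i) \<in> G" using W[of i] i b by simp
    have X: "(r (Suc i mod (b+1)), c i) \<notin> G \<and> r (Suc i mod (b+1)) \<noteq> c i"
    proof (cases "i < b")
      case True thus ?thesis using W[of i] b by simp
    next
      case False hence "i = b" using i by simp
      thus ?thesis using ch by simp
    qed
    thus "(r (Suc i mod (b+1)), c i) \<notin> G" "r (Suc i mod (b+1)) \<noteq> c i" by auto
  qed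
  let ?O = "Odd k r c" and ?E = "Even k r c" and ?O2 = "Odd (b+1) r c" and ?E2 = "Even (b+1) r c"
  have s: "symd (G - ?O2 \<union> ?E2) (G - ?O \<union> ?E) \<subseteq> (?O - ?O2) \<union> (?O2 - ?O) \<union> (?E - ?E2) \<union> (?E2 - ?E)"
    by (rule symd_sub) (use altcyc_facts[OF cy] altcyc_facts[OF cyA] in auto)
  have s1: "?O - ?O2 \<subseteq> (\<lambda>i. (r i, c i)) ` {b+1..<k}"
  proof
    fix x assume x: "x \<in> ?O - ?O2"
    then obtain i where i: "i < k" "x = (r i, c i)" unfolding Odd_def by auto
    have "\<not> i < b+1" using x i unfolding Odd_def by auto
    thus "x \<in> (\<lambda>i. (r i, c i)) ` {b+1..<k}" using i by auto
  qed
  have s2: "?O2 - ?O = {}" unfolding Odd_def using b by auto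
  have s3: "?E - ?E2 \<subseteq> (\<lambda>i. (r (Suc i mod k), c i)) ` {b..<k}"
  proof
    fix x assume x: "x \<in> ?E - ?E2"
    then obtain i where i: "i < k" "x = (r (Suc i mod k), c i)" unfolding Even_def by auto
    have "\<not> i < b"
    proof
      assume "i < b"
      hence "x = (r (Suc i mod (b+1)), c i)" "i < b+1" using i b by auto
      hence "x \<in> ?E2" unfolding Even_def by blast
      thus False using x by simp
    qed
    thus "x \<in> (\<lambda>i. (r (Suc i mod k), c i)) ` {b..<k}" using i by auto
  qed
  have s4: "?E2 - ?E \<subseteq> {(r 0, c b)}"
  proof
    fix x assume x: "x \<in> ?E2 - ?E"
    then obtain i where i: "i < b+1" "x = (r (Suc i mod (b+1)), c i)" unfolding Even_def by auto
    have "\<not> i < b"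
    proof
      assume "i < b"
      hence "x = (r (Suc i mod k), c i)" "i < k" using i b by auto
      hence "x \<in> ?E" unfolding Even_def by blast
      thus False using x by simp
    qed
    hence "i = b" using i by simp
    thus "x \<in> {(r 0, c b)}" using i by simp
  qed
  have "card (symd (G - ?O2 \<union> ?E2) (G - ?O \<union> ?E)) \<le> card ((\<lambda>i. (r i, c i)) ` {b+1..<k} \<union> {} \<union> (\<lambda>i. (r (Suc i mod k), c i)) ` {b..<k} \<union> {(r 0, c b)})"
    by (rule card_mono) (use s s1 s2 s3 s4 in auto)
  also have "\<dots> \<le> card ((\<lambda>i. (r i, c i)) ` {b+1..<k}) + card ({}::(nat\<times>nat) set) + card ((\<lambda>i. (r (Suc i mod k), c i)) ` {b..<k}) + card {(r 0, c b)}"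
    by (rule card4) auto
  also have "\<dots> \<le> (k - (b+1)) + 0 + (k - b) + 1"
    using card_image_le[of "{b+1..<k}" "\<lambda>i. (r i, c i)"] card_image_le[of "{b..<k}" "\<lambda>i. (r (Suc i mod k), c i)"]
    by simp
  also have "\<dots> < 2 * k" using b by simp
  finally show "card (symd (G - ?O2 \<union> ?E2) (G - ?O \<union> ?E)) < 2*k" .
qed



lemma chordB:
  assumes cy: "altcyc G k r c" and b: "1 \<le> b" "b + 2 \<le> k" and ch: "(r 0, c b) \<in> G"
  defines "r2 \<equiv> (\<lambda>t. if t = 0 then r 0 else r (b+t))" and "c2 \<equiv> (\<lambda>t. c (b+t))"
  shows "altcyc G (k-b) r2 c2"
    and "card (symd (G - Odd (k-b) r2 c2 \<union> Even (k-b) r2 c2) (G - Odd k r c \<union> Even k r c)) < 2*k"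
proof -
  have k2: "2 \<le> k" and ir: "inj_on r {..<k}" and ic: "inj_on c {..<k}"
    and W: "\<And>i. i<k \<Longrightarrow> (r i, c i) \<in> G \<and> (r (Suc i mod k), c i) \<notin> G \<and> r (Suc i mod k) \<noteq> c i"
    using cy unfolding altcyc_def by auto
  let ?O = "Odd k r c" and ?E = "Even k r c" and ?O2 = "Odd (k-b) r2 c2" and ?E2 = "Even (k-b) r2 c2"
  have Em: "\<And>i. i < k \<Longrightarrow> (r (Suc i mod k), c i) \<in> ?E" unfolding Even_def by blast
  have Om: "\<And>i. i < k \<Longrightarrow> (r i, c i) \<in> ?O" unfolding Odd_def by blast
  have E2e: "(r2 (Suc t mod (k-b)), c2 t) = (r (Suc (b+t) mod k), c (b+t))" if t: "t < k-b" for t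
  proof (cases "Suc t < k - b")
    case True thus ?thesis unfolding r2_def c2_def by simp
  next
    case False hence "Suc t = k - b" using t by simp
    hence "Suc (b+t) = k" using b by simp
    hence "Suc t mod (k-b) = 0" "Suc (b+t) mod k = 0" using \<open>Suc t = k - b\<close> by auto
    thus ?thesis unfolding r2_def c2_def by simp
  qed
  show cyB: "altcyc G (k-b) r2 c2"
    unfolding altcyc_def
  proof (intro conjI allI impI)
    show "2 \<le> k - b" using b by simp
    show "inj_on r2 {..<k-b}"
    proof (rule inj_onI)
      fix s t assume st: "s \<in> {..<k-b}" "t \<in> {..<k-b}" "r2 s = r2 t"
      show "s = t"
      proof (cases "s = 0"; cases "t = 0")
        assume "s = 0" "t = 0" thus ?thesis by simp
      next
        assume "s = 0" "t \<noteq> 0"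
        hence "r 0 = r (b+t)" using st unfolding r2_def by simp
        moreover have "b + t < k" "0 < k" using st b by auto
        ultimately have "0 = b + t" using inj_onD[OF ir, of 0 "b+t"] by simp
        thus ?thesis using \<open>t \<noteq> 0\<close> by simp
      next
        assume "s \<noteq> 0" "t = 0"
        hence "r (b+s) = r 0" using st unfolding r2_def by simp
        moreover have "b + s < k" "0 < k" using st b by auto
        ultimately have "b + s = 0" using inj_onD[OF ir, of "b+s" 0] by simp
        thus ?thesis using \<open>s \<noteq> 0\<close> by simp
      next
        assume "s \<noteq> 0" "t \<noteq> 0"
        hence "r (b+s) = r (b+t)" using st unfolding r2_def by simp
        moreover have "b + s < k" "b + t < k" using st b by auto
        ultimately have "b + s = b + t" using inj_onD[OF ir, of "b+s" "b+t"] by simp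
        thus ?thesis by simp
      qed
    qed
    show "inj_on c2 {..<k-b}"
    proof (rule inj_onI)
      fix s t assume st: "s \<in> {..<k-b}" "t \<in> {..<k-b}" "c2 s = c2 t"
      moreover have "b + s < k" "b + t < k" using st b by auto
      ultimately have "b + s = b + t" using inj_onD[OF ic, of "b+s" "b+t"] unfolding c2_def by simp
      thus "s = t" by simp
    qed
    fix t assume t: "t < k - b"
    show "(r2 t, c2 t) \<in> G" using W[of "b+t"] t ch unfolding r2_def c2_def by auto
    show "(r2 (Suc t mod (k-b)), c2 t) \<notin> G" using E2e[OF t] W[of "b+t"] t by simp
    show "r2 (Suc t mod (k-b)) \<noteq> c2 t" using E2e[OF t] W[of "b+t"] t by simp
  qed
  have s: "symd (G - ?O2 \<union> ?E2) (G - ?O \<union> ?E) \<subseteq> (?O - ?O2) \<union> (?O2 - ?O) \<union> (?E - ?E2) \<union> (?E2 - ?E)"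
    by (rule symd_sub) (use altcyc_facts[OF cy] altcyc_facts[OF cyB] in auto)
  have s1: "?O - ?O2 \<subseteq> (\<lambda>i. (r i, c i)) ` {..<b+1}"
  proof
    fix x assume x: "x \<in> ?O - ?O2"
    then obtain i where i: "i < k" "x = (r i, c i)" unfolding Odd_def by auto
    have "\<not> b < i"
    proof
      assume bi: "b < i"
      hence "x = (r2 (i-b), c2 (i-b))" "i - b < k - b" using i unfolding r2_def c2_def by auto
      hence "x \<in> ?O2" unfolding Odd_def by blast
      thus False using x by simp
    qed
    thus "x \<in> (\<lambda>i. (r i, c i)) ` {..<b+1}" using i by auto
  qed
  have s2: "?O2 - ?O \<subseteq> {(r 0, c b)}"
  proof
    fix x assume x: "x \<in> ?O2 - ?O"
    then obtain t where t: "t < k-b" "x = (r2 t, c2 t)" unfolding Odd_def by auto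
    have "t = 0"
    proof (rule ccontr)
      assume "t \<noteq> 0"
      hence "x = (r (b+t), c (b+t))" "b + t < k" using t unfolding r2_def c2_def by auto
      thus False using Om x by blast
    qed
    thus "x \<in> {(r 0, c b)}" using t unfolding r2_def c2_def by simp
  qed
  have s3: "?E - ?E2 \<subseteq> (\<lambda>i. (r (Suc i mod k), c i)) ` {..<b}"
  proof
    fix x assume x: "x \<in> ?E - ?E2"
    then obtain i where i: "i < k" "x = (r (Suc i mod k), c i)" unfolding Even_def by auto
    have "\<not> b \<le> i"
    proof
      assume bi: "b \<le> i"
      hence "x = (r2 (Suc (i-b) mod (k-b)), c2 (i-b))" "i - b < k - b"
        using i E2e[of "i-b"] by auto
      hence "x \<in> ?E2" unfolding Even_def by blast
      thus False using x by simp
    qed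
    thus "x \<in> (\<lambda>i. (r (Suc i mod k), c i)) ` {..<b}" using i by auto
  qed
  have s4: "?E2 - ?E = {}"
  proof -
    have "?E2 \<subseteq> ?E"
    proof
      fix x assume "x \<in> ?E2"
      then obtain t where t: "t < k-b" "x = (r2 (Suc t mod (k-b)), c2 t)" unfolding Even_def by auto
      thus "x \<in> ?E" using E2e[OF t(1)] Em[of "b+t"] by auto
    qed
    thus ?thesis by simp
  qed
  have "card (symd (G - ?O2 \<union> ?E2) (G - ?O \<union> ?E)) \<le> card ((\<lambda>i. (r i, c i)) ` {..<b+1} \<union> {(r 0, c b)} \<union> (\<lambda>i. (r (Suc i mod k), c i)) ` {..<b} \<union> {})"
    by (rule card_mono) (use s s1 s2 s3 s4 in auto)
  also have "\<dots> \<le> card ((\<lambda>i. (r i, c i)) ` {..<b+1}) + card {(r 0, c b)} + card ((\<lambda>i. (r (Suc i mod k), c i)) ` {..<b}) + card ({}::(nat\<times>nat) set)"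
    by (rule card4) auto
  also have "\<dots> \<le> (b+1) + 1 + b + 0"
    using card_image_le[of "{..<b+1}" "\<lambda>i. (r i, c i)"] card_image_le[of "{..<b}" "\<lambda>i. (r (Suc i mod k), c i)"]
    by simp
  also have "\<dots> < 2 * k" using b by simp
  finally show "card (symd (G - ?O2 \<union> ?E2) (G - ?O \<union> ?E)) < 2*k" .
qed



lemma chord_case:
  assumes G: "G \<in> Omega n d" and cy: "altcyc G k r c" and b: "1 \<le> b" "b + 2 \<le> k" and ch: "r 0 \<noteq> c b"
  shows "\<exists>G''. G'' \<in> Omega n d \<and> card (symd G G'') < 2*k \<and> card (symd G'' (G - Odd k r c \<union> Even k r c)) < 2*k"
proof (cases "(r 0, c b) \<in> G")
  case False
  have cyA: "altcyc G (b+1) r c" using chordA(1)[OF cy b ch False] .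
  show ?thesis
  proof (intro exI conjI)
    show "G - Odd (b+1) r c \<union> Even (b+1) r c \<in> Omega n d" by (rule omega_swap[OF G cyA])
    show "card (symd G (G - Odd (b+1) r c \<union> Even (b+1) r c)) < 2*k"
      using symd_G[OF cyA] card_OE[of "b+1" r c] b by simp
    show "card (symd (G - Odd (b+1) r c \<union> Even (b+1) r c) (G - Odd k r c \<union> Even k r c)) < 2*k"
      by (rule chordA(2)[OF cy b ch False])
  qed
next
  case True
  define r2 where "r2 = (\<lambda>t. if t = 0 then r 0 else r (b+t))"
  define c2 where "c2 = (\<lambda>t. c (b+t))"
  have cyB: "altcyc G (k-b) r2 c2" using chordB(1)[OF cy b True] unfolding r2_def c2_def .
  show ?thesis
  proof (intro exI conjI)
    show "G - Odd (k-b) r2 c2 \<union> Even (k-b) r2 c2 \<in> Omega n d" by (rule omega_swap[OF G cyB])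
    show "card (symd G (G - Odd (k-b) r2 c2 \<union> Even (k-b) r2 c2)) < 2*k"
      using symd_G[OF cyB] card_OE[of "k-b" r2 c2] b by simp
    show "card (symd (G - Odd (k-b) r2 c2 \<union> Even (k-b) r2 c2) (G - Odd k r c \<union> Even k r c)) < 2*k"
      using chordB(2)[OF cy b True] unfolding r2_def c2_def .
  qed
qed

lemma lt3: "{..<3::nat} = {0,1,2}" by auto
lemma less3: "(i::nat) < 3 \<longleftrightarrow> i = 0 \<or> i = 1 \<or> i = 2" by presburger
lemma all3: "(\<forall>i<3::nat. P i) \<longleftrightarrow> P 0 \<and> P 1 \<and> P 2"
proof
  assume "\<forall>i<3::nat. P i" thus "P 0 \<and> P 1 \<and> P 2" by simp
next
  assume h: "P 0 \<and> P 1 \<and> P 2"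
  show "\<forall>i<3::nat. P i"
  proof (intro allI impI)
    fix i :: nat assume "i < 3" hence "i = 0 \<or> i = 1 \<or> i = 2" by (rule less3[THEN iffD1])
    thus "P i" using h by auto
  qed
qed

lemma Odd3: "Odd 3 r c = {(r 0, c 0), (r 1, c 1), (r 2, c 2)}" unfolding Odd_def lt3 by simp
lemma Even3: "Even 3 r c = {(r 1, c 0), (r 2, c 1), (r 0, c 2)}" 
proof -
  have m: "Suc 0 mod 3 = (1::nat)" "Suc 1 mod 3 = (2::nat)" "Suc 2 mod 3 = (0::nat)" by simp_all
  show ?thesis unfolding Even_def lt3 image_insert image_empty m by simp
qed

lemma alt3: "altcyc G 3 r c \<longleftrightarrow> r 0 \<noteq> r 1 \<and> r 0 \<noteq> r 2 \<and> r 1 \<noteq> r 2 \<and> c 0 \<noteq> c 1 \<and> c 0 \<noteq> c 2 \<and> c 1 \<noteq> c 2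
   \<and> (r 0, c 0) \<in> G \<and> (r 1, c 1) \<in> G \<and> (r 2, c 2) \<in> G
   \<and> (r 1, c 0) \<notin> G \<and> (r 2, c 1) \<notin> G \<and> (r 0, c 2) \<notin> G \<and> r 1 \<noteq> c 0 \<and> r 2 \<noteq> c 1 \<and> r 0 \<noteq> c 2"
proof -
  have m: "Suc 0 mod 3 = 1" "Suc 1 mod 3 = 2" "Suc 2 mod 3 = (0::nat)" by simp_all
  show ?thesis unfolding altcyc_def lt3 all3 m by (simp add: inj_on_def) argo
qed

lemma rot3:
  assumes "altcyc G 3 r c"
  defines "r' \<equiv> (\<lambda>t::nat. if t = 0 then r 1 else if t = 1 then r 2 else r 0)"
    and "c' \<equiv> (\<lambda>t::nat. if t = 0 then c 1 else if t = 1 then c 2 else c 0)"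
  shows "altcyc G 3 r' c'" "Odd 3 r' c' = Odd 3 r c" "Even 3 r' c' = Even 3 r c"
  using assms unfolding alt3 Odd3 Even3 r'_def c'_def by auto

lemma main_ind:
  assumes n4: "4 \<le> n"
  shows "\<forall>G G'. G \<in> Omega n d \<and> G' \<in> Omega n d \<and> card (symd G G') = D \<longrightarrow> conn n d G G'"
proof (induction D rule: less_induct)
  case (less D)
  have IH: "\<And>G G'. G \<in> Omega n d \<Longrightarrow> G' \<in> Omega n d \<Longrightarrow> card (symd G G') < D \<Longrightarrow> conn n d G G'"
    using less by blast
  show ?case
  proof (intro allI impI, elim conjE)
    fix G G' assume G: "G \<in> Omega n d" and G': "G' \<in> Omega n d" and D: "card (symd G G') = D"
    have finS: "finite (symd G G')" using Omega_fin[OF G] Omega_fin[OF G'] unfolding symd_def by auto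
    have via: "conn n d G G'" if H: "H \<in> Omega n d" "card (symd G H) < D" "card (symd H G') < D" for H
      using IH[OF G H(1,2)] IH[OF H(1) G' H(3)] by (metis rtranclp_trans)
    show "conn n d G G'"
    proof (cases "G = G'")
      case True thus ?thesis by simp
    next
      case False
      let ?P = "\<lambda>m. \<exists>r c. walk (G - G') (G' - G) m r c"
      have "\<exists>m. ?P m" using walk_exists[OF G G' False] by blast
      then obtain m where Pm: "?P m" and mn: "\<forall>m'<m. \<not> ?P m'" using exists_least_iff[of ?P] by blast
      then obtain r c where w: "walk (G - G') (G' - G) m r c" by blast
      have cy: "altcyc G m r c" by (rule walk_min_altcyc[OF G' w mn])
      let ?O = "Odd m r c" and ?E = "Even m r c"
      have OR: "?O \<subseteq> G - G'" and EB: "?E \<subseteq> G' - G"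
        using w unfolding walk_def Odd_def Even_def by auto
      have OEs: "?O \<union> ?E \<subseteq> symd G G'" using OR EB unfolding symd_def by auto
      have m2: "2 \<le> m" and ir: "inj_on r {..<m}" and ic: "inj_on c {..<m}"
        using cy unfolding altcyc_def by auto
      show ?thesis
      proof (cases "?O \<union> ?E = symd G G'")
        case False
        let ?H = "G - ?O \<union> ?E"
        show ?thesis
        proof (rule via)
          show H: "?H \<in> Omega n d" by (rule omega_swap[OF G cy])
          have "?O \<union> ?E \<subset> symd G G'" using OEs False by auto
          thus "card (symd G ?H) < D"
            using symd_G[OF cy] D psubset_card_mono[OF finS] by auto
          have r0: "(r 0, c 0) \<in> ?O" using m2 unfolding Odd_def by auto
          have "symd ?H G' \<subseteq> symd G G' - ?O" using OR EB unfolding symd_def by auto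
          moreover have "symd G G' - ?O \<subset> symd G G'" using r0 OEs by auto
          ultimately have "symd ?H G' \<subset> symd G G'" by blast
          thus "card (symd ?H G') < D" using D psubset_card_mono[OF finS] by auto
        qed
      next
        case True
        have G'eq: "G' = G - ?O \<union> ?E" using True OR EB unfolding symd_def by blast
        have D2: "D = 2*m" using card_OE_eq[OF cy] True D by simp
        have chordok: "conn n d G G'" if b: "1 \<le> b" "b + 2 \<le> m" "r 0 \<noteq> c b" for b
        proof -
          obtain H where "H \<in> Omega n d" "card (symd G H) < 2*m" "card (symd H (G - ?O \<union> ?E)) < 2*m"
            using chord_case[OF G cy b] by blast
          thus ?thesis using via G'eq D2 by simp
        qed
        show ?thesis
        proof (cases "m = 2")
          case True
          have two: "{..<m} = {0,1}" using True by auto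
          have ne: "r 0 \<noteq> r 1" "c 0 \<noteq> c 1" using inj_onD[OF ir, of 0 1] inj_onD[OF ic, of 0 1] True by auto
          have f: "(r 0, c 0) \<in> G" "(r 1, c 1) \<in> G" "(r 1, c 0) \<notin> G" "(r 0, c 1) \<notin> G" "r 1 \<noteq> c 0" "r 0 \<noteq> c 1"
            using cy unfolding altcyc_def True by (auto simp: less_2_cases_iff)
          have lp: "\<And>v. (v,v) \<notin> G" using G unfolding Omega_def by auto
          have l2: "{..<2::nat} = {0,1}" by auto
          have md: "Suc 0 mod 2 = (1::nat)" "Suc 1 mod 2 = (0::nat)" by simp_all
          have "G' = G - {(r 0, c 0), (r 1, c 1)} \<union> {(r 0, c 1), (r 1, c 0)}"
            using G'eq unfolding True Odd_def Even_def l2 image_insert image_empty md by auto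
          thus ?thesis
            by (intro swl[OF G f(1,2) f(4,3)]) (use ne f lp in \<open>auto dest: sym\<close>)
        next
          case False
          show ?thesis
          proof (cases "m = 3")
            case False
            hence m4: "4 \<le> m" using m2 \<open>m \<noteq> 2\<close> by simp
            have "c 1 \<noteq> c 2" using inj_onD[OF ic, of 1 2] m4 by auto
            hence "r 0 \<noteq> c 1 \<or> r 0 \<noteq> c 2" by auto
            thus ?thesis using chordok[of 1] chordok[of 2] m4 by fastforce
          next
            case True
            note m3 = True
            have cy3: "altcyc G 3 r c" using cy True by simp
            show ?thesis
            proof (cases "r 0 = c 1")
              case False thus ?thesis using chordok[of 1] m3 by simp
            next
              case c01: True
              define r1 where "r1 = (\<lambda>t::nat. if t = 0 then r 1 else if t = 1 then r 2 else r 0)"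
              define c1 where "c1 = (\<lambda>t::nat. if t = 0 then c 1 else if t = 1 then c 2 else c 0)"
              have R1: "altcyc G 3 r1 c1" "Odd 3 r1 c1 = Odd 3 r c" "Even 3 r1 c1 = Even 3 r c"
                using rot3[OF cy3] unfolding r1_def c1_def by auto
              define r2 where "r2 = (\<lambda>t::nat. if t = 0 then r1 1 else if t = 1 then r1 2 else r1 0)"
              define c2 where "c2 = (\<lambda>t::nat. if t = 0 then c1 1 else if t = 1 then c1 2 else c1 0)"
              have R2: "altcyc G 3 r2 c2" "Odd 3 r2 c2 = Odd 3 r c" "Even 3 r2 c2 = Even 3 r c"
                using rot3[OF R1(1)] R1 unfolding r2_def c2_def by auto
              show ?thesis
              proof (cases "r 1 = c 2")
                case False
                obtain H where "H \<in> Omega n d" "card (symd G H) < 2*3" "card (symd H (G - Odd 3 r1 c1 \<union> Even 3 r1 c1)) < 2*3"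
                  using chord_case[OF G R1(1), of 1] False unfolding r1_def c1_def by auto
                thus ?thesis using via G'eq D2 m3 R1 by simp
              next
                case c12: True
                show ?thesis
                proof (cases "r 2 = c 0")
                  case False
                  obtain H where "H \<in> Omega n d" "card (symd G H) < 2*3" "card (symd H (G - Odd 3 r2 c2 \<union> Even 3 r2 c2)) < 2*3"
                    using chord_case[OF G R2(1), of 1] False unfolding r2_def c2_def r1_def c1_def by auto
                  thus ?thesis using via G'eq D2 m3 R2 by simp
                next
                  case c20: True
                  have f: "(r 0, r 2) \<in> G" "(r 2, r 1) \<in> G" "(r 1, r 0) \<in> G"
                    "(r 2, r 0) \<notin> G" "(r 1, r 2) \<notin> G" "(r 0, r 1) \<notin> G"
                    using cy3 c01 c12 c20 unfolding alt3 by auto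
                  have "G' = tri G (r 0) (r 2) (r 1)"
                    using G'eq c01 c12 c20 unfolding m3 Odd3 Even3 tri_def by auto
                  thus ?thesis using triangle[OF G n4 f] by simp
                qed
              qed
            qed
          qed
        qed
      qed
    qed
  qed
qed


theorem mainTheorem5:
  fixes n d :: nat
  assumes "n \<ge> 4" and "1 \<le> d" and "d \<le> n - 1"
    and "G \<in> Omega n d" and "G' \<in> Omega n d"
  shows "(switch_in_Omega n d)\<^sup>*\<^sup>* G G'"
  using main_ind[OF assms(1)] assms(4,5) by blast

end
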